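(* Let $m\ge2$, $k\ge2$, $n\ge1$, $\mathcal{A}=(a_{i_1i_2\cdots i_m})\in\mathbb{C}^{[m,n]}$ and $\mathcal{B}=(b_{i_1i_2\cdots i_k})\in\mathbb{C}^{[k,n]}$. For $i\in[n]$ let $c_{i\cdots i}=\sum_{i_2,\ldots,i_m=1}^n a_{ii_2\cdots i_m}b_{i_2i\cdots i}\cdots b_{i_mi\cdots i}$ (the diagonal entries of $\mathcal{A}\mathcal{B}$). Then \[\sigma(\mathcal{A}\mathcal{B})\subseteq\mathbf{G}=\bigcup_{i\in[n]}\{z\in\mathbb{C}:|z-c_{i\cdots i}|\le r_i(\mathcal{A})(R(\mathcal{B}))^{m-1}-|c_{i\cdots i}|\}.\]
   Context: $[n]=\{1,\ldots,n\}$. $\mathbb{C}^{[m,n]}$ denotes the set of order $m$, dimension $n$ complex tensors. For a tensor $\mathcal{T}=(t_{i_1\cdots i_p})$ of order $p$ and dimension $n$: $r_i(\mathcal{T})=\sum_{i_2,\ldots,i_p=1}^n|t_{ii_2\cdots i_p}|$, $R(\mathcal{T})=\max_{i\in[n]}r_i(\mathcal{T})$. General product: $\mathcal{A}\mathcal{B}=(c_{i\alpha_1\cdots\alpha_{m-1}})$ is the order $(m-1)(k-1)+1$, dimension $n$ tensor with $c_{i\alpha_1\cdots\alpha_{m-1}}=\sum_{i_2,\ldots,i_m=1}^n a_{ii_2\cdots i_m}b_{i_2\alpha_1}\cdots b_{i_m\alpha_{m-1}}$, $i\in[n]$, $\alpha_j\in[n]^{k-1}$ (where $b_{j\alpha}$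 with $\alpha=(j_2,\ldots,j_k)$ means $b_{jj_2\cdots j_k}$). Eigenvalues of a tensor $\mathcal{T}$ of order $p\ge2$: $\lambda\in\mathbb{C}$ such that there is a nonzero $x\in\mathbb{C}^n$ with $\sum_{i_2,\ldots,i_p=1}^n t_{ii_2\cdots i_p}x_{i_2}\cdots x_{i_p}=\lambda x_i^{p-1}$ for all $i\in[n]$; $\sigma(\mathcal{T})$ is the set of eigenvalues of $\mathcal{T}$. *)

theory Defs
  imports Complex_Main
begin

text \<open>Tensors of order p and dimension n are represented as functions
  from index lists to complex numbers; only lists of length p with entries
  in {0..<n} matter (0-based indices: index i stands for i+1 in the paper).\<close>

type_synonym tensor = "nat list \<Rightarrow> complex"

definition idx :: "nat \<Rightarrow> nat \<Rightarrow> nat list set" where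
  "idx p n = {xs. length xs = p \<and> set xs \<subseteq> {..<n}}"

definition row_abs_sum :: "nat \<Rightarrow> nat \<Rightarrow> tensor \<Rightarrow> nat \<Rightarrow> real" where
  "row_abs_sum p n T i = (\<Sum>rest\<in>idx (p - 1) n. cmod (T (i # rest)))"

definition max_row_abs_sum :: "nat \<Rightarrow> nat \<Rightarrow> tensor \<Rightarrow> real" where
  "max_row_abs_sum p n T = Max ((row_abs_sum p n T) ` {..<n})"

text \<open>General product of A (order m) and B (order k), dimension n: an
  index i # alpha_1 @ ... @ alpha_(m-1) with each alpha_j of length k-1.\<close>
definition tprod :: "nat \<Rightarrow> nat \<Rightarrow> nat \<Rightarrow> tensor \<Rightarrow> tensor \<Rightarrow> tensor" where
  "tprod m k n A B = (\<lambda>xs.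
     (\<Sum>rest\<in>idx (m - 1) n. A (hd xs # rest) *
        (\<Prod>j<m - 1. B (rest ! j # take (k - 1) (drop (j * (k - 1)) (tl xs))))))"

definition is_eigenvalue :: "nat \<Rightarrow> nat \<Rightarrow> tensor \<Rightarrow> complex \<Rightarrow> bool" where
  "is_eigenvalue p n T lam \<longleftrightarrow>
     (\<exists>x :: nat \<Rightarrow> complex. (\<exists>i<n. x i \<noteq> 0) \<and>
        (\<forall>i<n. (\<Sum>rest\<in>idx (p - 1) n. T (i # rest) * (\<Prod>j<p - 1. x (rest ! j)))
               = lam * x i ^ (p - 1)))"

definition spectrum_t :: "nat \<Rightarrow> nat \<Rightarrow> tensor \<Rightarrow> complex set" where
  "spectrum_t p n T = {lam. is_eigenvalue p n T lam}"

end

theory Submission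
  imports Defs
begin

lemma idx_Suc: "idx (Suc p) n = (\<lambda>(a,xs). a#xs) ` ({..<n} \<times> idx p n)"
  unfolding idx_def
  apply (auto simp: image_def)
  by (metis (no_types, lifting) Suc_length_conv insert_subset lessThan_iff list.simps(15))

lemma idx_0[simp]: "idx 0 n = {[]}" by (auto simp: idx_def)

lemma finite_idx: "finite (idx p n)"
  by (induction p) (simp_all add: idx_Suc)

lemma idx_add: "idx (a+b) n = (\<lambda>(x,y). x@y) ` (idx a n \<times> idx b n)"
proof
  show "idx (a+b) n \<subseteq> (\<lambda>(x,y). x@y) ` (idx a n \<times> idx b n)"
  proof
    fix xs assume "xs \<in> idx (a+b) n"
    hence "take a xs \<in> idx a n" "drop a xs \<in> idx b n"
      unfolding idx_def by (auto dest: in_set_takeD in_set_dropD)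
    thus "xs \<in> (\<lambda>(x,y). x@y) ` (idx a n \<times> idx b n)"
      by (intro image_eqI[of _ _ "(take a xs, drop a xs)"]) auto
  qed
qed (auto simp: idx_def)

lemma inj_app: "inj_on (\<lambda>(x,y). x@y) (idx a n \<times> idx b n)"
  by (auto simp: inj_on_def idx_def)

lemma sum_blocks:
  fixes f :: "nat \<Rightarrow> nat list \<Rightarrow> 'a::comm_semiring_1"
  shows "(\<Sum>xs\<in>idx (q*L) n. \<Prod>j<q. f j (take L (drop (j*L) xs))) = (\<Prod>j<q. \<Sum>a\<in>idx L n. f j a)"
proof (induction q arbitrary: f)
  case 0
  then show ?case by simp
next
  case (Suc q)
  have "(\<Sum>xs\<in>idx (Suc q*L) n. \<Prod>j<Suc q. f j (take L (drop (j*L) xs)))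
     = (\<Sum>xs\<in>idx (L + q*L) n. \<Prod>j<Suc q. f j (take L (drop (j*L) xs)))" by simp
  also have "\<dots> = (\<Sum>(x,y)\<in>idx L n \<times> idx (q*L) n. \<Prod>j<Suc q. f j (take L (drop (j*L) (x@y))))"
    unfolding idx_add by (subst sum.reindex[OF inj_app]) (simp add: case_prod_unfold)
  also have "\<dots> = (\<Sum>(x,y)\<in>idx L n \<times> idx (q*L) n. f 0 x * (\<Prod>j<q. f (Suc j) (take L (drop (j*L) y))))"
  proof (rule sum.cong[OF refl], clarify)
    fix x y assume "x \<in> idx L n" "y \<in> idx (q*L) n"
    hence lx: "length x = L" by (simp add: idx_def)
    have "(\<Prod>j<Suc q. f j (take L (drop (j*L) (x@y)))) = f 0 (take L (drop (0*L) (x@y))) * (\<Prod>j<q. f (Suc j) (take L (drop (Suc j*L) (x@y))))"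
      by (rule prod.lessThan_Suc_shift)
    also have "\<dots> = f 0 x * (\<Prod>j<q. f (Suc j) (take L (drop (j*L) y)))"
      using lx by simp
    finally show "(\<Prod>j<Suc q. f j (take L (drop (j*L) (x@y)))) = f 0 x * (\<Prod>j<q. f (Suc j) (take L (drop (j*L) y)))" .
  qed
  also have "\<dots> = (\<Sum>x\<in>idx L n. f 0 x * (\<Sum>y\<in>idx (q*L) n. (\<Prod>j<q. f (Suc j) (take L (drop (j*L) y)))))"
    by (simp add: sum.cartesian_product[symmetric] sum_distrib_left)
  also have "\<dots> = (\<Sum>x\<in>idx L n. f 0 x) * (\<Prod>j<q. \<Sum>a\<in>idx L n. f (Suc j) a)"
    using Suc.IH[of "\<lambda>j. f (Suc j)"] by (simp add: sum_distrib_right)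
  also have "\<dots> = (\<Prod>j<Suc q. \<Sum>a\<in>idx L n. f j a)"
    by (rule prod.lessThan_Suc_shift[symmetric])
  finally show ?case .
qed
lemma row_le_R:
  assumes "i < n" shows "row_abs_sum k n B i \<le> max_row_abs_sum k n B"
  unfolding max_row_abs_sum_def using assms by (intro Max_ge) auto

lemma row_nonneg: "row_abs_sum k n B i \<ge> 0"
  unfolding row_abs_sum_def by (simp add: sum_nonneg)

lemma rowT_bound:
  assumes "m \<ge> 2" "k \<ge> 2"
  shows "(\<Sum>rest\<in>idx ((m-1)*(k-1)) n. cmod (tprod m k n A B (t#rest)))
     \<le> row_abs_sum m n A t * (max_row_abs_sum k n B) ^ (m - 1)"
proof -
  define q where "q = m - 1"
  define L where "L = k - 1"
  define R where "R = max_row_abs_sum k n B"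
  have "(\<Sum>rest\<in>idx (q*L) n. cmod (tprod m k n A B (t#rest)))
     = (\<Sum>rest\<in>idx (q*L) n. cmod (\<Sum>r\<in>idx q n. A (t#r) * (\<Prod>j<q. B (r!j # take L (drop (j*L) rest)))))"
    by (simp add: tprod_def q_def L_def)
  also have "\<dots> \<le> (\<Sum>rest\<in>idx (q*L) n. \<Sum>r\<in>idx q n. cmod (A (t#r)) * (\<Prod>j<q. cmod (B (r!j # take L (drop (j*L) rest)))))"
    by (intro sum_mono order.trans[OF norm_sum]) (simp add: norm_mult prod_norm)
  also have "\<dots> = (\<Sum>r\<in>idx q n. cmod (A (t#r)) * (\<Sum>rest\<in>idx (q*L) n. (\<Prod>j<q. cmod (B (r!j # take L (drop (j*L) rest))))))"
    by (subst sum.swap) (simp add: sum_distrib_left)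
  also have "\<dots> = (\<Sum>r\<in>idx q n. cmod (A (t#r)) * (\<Prod>j<q. row_abs_sum k n B (r!j)))"
  proof (intro sum.cong refl arg_cong2[where f="(*)"])
    fix r show "(\<Sum>rest\<in>idx (q*L) n. (\<Prod>j<q. cmod (B (r!j # take L (drop (j*L) rest))))) = (\<Prod>j<q. row_abs_sum k n B (r!j))"
      using sum_blocks[where f="\<lambda>j a. cmod (B (r!j # a))" and q=q and L=L and n=n] by (simp add: row_abs_sum_def L_def)
  qed
  also have "\<dots> \<le> (\<Sum>r\<in>idx q n. cmod (A (t#r)) * R ^ q)"
  proof (intro sum_mono mult_left_mono)
    fix r assume r: "r \<in> idx q n"
    have "(\<Prod>j<q. row_abs_sum k n B (r!j)) \<le> (\<Prod>j<q. R)"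
    proof (intro prod_mono conjI row_nonneg)
      fix j assume "j \<in> {..<q}"
      with r have "r!j < n" by (auto simp: idx_def dest!: nth_mem)
      thus "row_abs_sum k n B (r!j) \<le> R" unfolding R_def by (rule row_le_R)
    qed
    thus "(\<Prod>j<q. row_abs_sum k n B (r!j)) \<le> R ^ q" by simp
  qed simp
  also have "\<dots> = row_abs_sum m n A t * R ^ q"
    by (simp add: row_abs_sum_def q_def sum_distrib_right)
  finally show ?thesis by (simp add: q_def L_def R_def)
qed

theorem theorem4p3:
  fixes m k n :: nat and A B :: tensor
  assumes "m \<ge> 2" and "k \<ge> 2" and "n \<ge> 1"
  defines "c \<equiv> (\<lambda>i. \<Sum>rest\<in>idx (m - 1) n.
              A (i # rest) * (\<Prod>j<m - 1. B (rest ! j # replicate (k - 1) i)))"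
  shows "spectrum_t ((m - 1) * (k - 1) + 1) n (tprod m k n A B) \<subseteq>
    (\<Union>i\<in>{..<n}. {z. cmod (z - c i) \<le>
        row_abs_sum m n A i * (max_row_abs_sum k n B) ^ (m - 1) - cmod (c i)})"
proof
  fix lam assume "lam \<in> spectrum_t ((m - 1) * (k - 1) + 1) n (tprod m k n A B)"
  define q where "q = m - 1"
  define L where "L = k - 1"
  define T where "T = tprod m k n A B"
  define S where "S = idx (q*L) n"
  obtain x :: "nat \<Rightarrow> complex" where nz: "\<exists>i<n. x i \<noteq> 0" and
    eq: "\<And>i. i<n \<Longrightarrow> (\<Sum>rest\<in>S. T (i # rest) * (\<Prod>j<q*L. x (rest ! j))) = lam * x i ^ (q*L)"
    using \<open>lam \<in> _\<close> unfolding spectrum_t_def is_eigenvalue_def S_def T_def q_def L_def by auto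
  obtain t where t: "t < n" "\<And>i. i < n \<Longrightarrow> cmod (x i) \<le> cmod (x t)"
  proof -
    have "finite ((\<lambda>i. cmod (x i)) ` {..<n})" "(\<lambda>i. cmod (x i)) ` {..<n} \<noteq> {}" using assms(3) by (auto simp: lessThan_empty_iff)
    from Max_in[OF this] obtain t where "t < n" "Max ((\<lambda>i. cmod (x i)) ` {..<n}) = cmod (x t)" by auto
    with that show ?thesis by (metis Max_ge \<open>finite _\<close> image_eqI lessThan_iff)
  qed
  from nz obtain i0 where "i0 < n" "x i0 \<noteq> 0" by auto
  with t have xt: "cmod (x t) > 0" by (metis norm_le_zero_iff not_le order.strict_trans2 zero_less_norm_iff)
  define d where "d = replicate (q*L) t"
  have dS: "d \<in> S" using t(1) by (auto simp: S_def d_def idx_def simp: in_set_replicate)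
  have finS: "finite S" by (simp add: S_def finite_idx)
  have Td: "T (t # d) = c t"
  proof -
    have "\<And>j. j < q \<Longrightarrow> take L (drop (j*L) d) = replicate L t"
    proof -
      fix j assume "j < q"
      hence "j*L + L \<le> q*L" by (metis add.commute mult_Suc less_eq_Suc_le mult_le_mono1)
      thus "take L (drop (j*L) d) = replicate L t" by (simp add: d_def)
    qed
    thus ?thesis unfolding T_def tprod_def c_def q_def L_def
      by (intro sum.cong refl arg_cong2[where f="(*)"] prod.cong) auto
  qed
  have bnd: "\<And>rest. rest \<in> S \<Longrightarrow> cmod (\<Prod>j<q*L. x (rest ! j)) \<le> cmod (x t) ^ (q*L)"
  proof -
    fix rest assume "rest \<in> S"
    hence "\<And>j. j < q*L \<Longrightarrow> rest ! j < n"
    proof -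
      fix j assume j: "j < q*L" and r: "rest \<in> S"
      hence "rest ! j \<in> set rest" by (simp add: S_def idx_def)
      with r show "rest ! j < n" by (auto simp: S_def idx_def)
    qed
    hence "(\<Prod>j<q*L. cmod (x (rest ! j))) \<le> (\<Prod>j<q*L. cmod (x t))"
      by (intro prod_mono) (auto intro: t(2))
    thus "cmod (\<Prod>j<q*L. x (rest ! j)) \<le> cmod (x t) ^ (q*L)" by (simp add: prod_norm[symmetric])
  qed
  have "(lam - c t) * x t ^ (q*L) = (\<Sum>rest\<in>S - {d}. T (t # rest) * (\<Prod>j<q*L. x (rest ! j)))"
  proof -
    have "lam * x t ^ (q*L) = T (t # d) * (\<Prod>j<q*L. x (d ! j)) + (\<Sum>rest\<in>S - {d}. T (t # rest) * (\<Prod>j<q*L. x (rest ! j)))"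
      using eq[OF t(1)] sum.remove[OF finS dS, of "\<lambda>rest. T (t # rest) * (\<Prod>j<q*L. x (rest ! j))"] by simp
    moreover have "(\<Prod>j<q*L. x (d ! j)) = x t ^ (q*L)" by (simp add: d_def)
    ultimately show ?thesis using Td by (simp add: algebra_simps)
  qed
  hence "cmod (lam - c t) * cmod (x t) ^ (q*L) \<le> (\<Sum>rest\<in>S - {d}. cmod (T (t # rest)) * cmod (x t) ^ (q*L))"
  proof -
    assume h: "(lam - c t) * x t ^ (q*L) = (\<Sum>rest\<in>S - {d}. T (t # rest) * (\<Prod>j<q*L. x (rest ! j)))"
    have "cmod (lam - c t) * cmod (x t) ^ (q*L) = cmod ((lam - c t) * x t ^ (q*L))" by (simp add: norm_mult norm_power)
    also have "\<dots> \<le> (\<Sum>rest\<in>S - {d}. cmod (T (t # rest) * (\<Prod>j<q*L. x (rest ! j))))"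
      unfolding h by (rule norm_sum)
    also have "\<dots> \<le> (\<Sum>rest\<in>S - {d}. cmod (T (t # rest)) * cmod (x t) ^ (q*L))"
      unfolding norm_mult by (intro sum_mono mult_left_mono bnd) auto
    finally show ?thesis .
  qed
  also have "\<dots> = (\<Sum>rest\<in>S - {d}. cmod (T (t # rest))) * cmod (x t) ^ (q*L)"
    by (simp add: sum_distrib_right)
  finally have "cmod (lam - c t) \<le> (\<Sum>rest\<in>S - {d}. cmod (T (t # rest)))"
    using xt by (simp add: mult_le_cancel_right)
  also have "\<dots> = (\<Sum>rest\<in>S. cmod (T (t # rest))) - cmod (c t)"
    using sum.remove[OF finS dS, of "\<lambda>rest. cmod (T (t # rest))"] Td by simp
  also have "(\<Sum>rest\<in>S. cmod (T (t # rest))) \<le> row_abs_sum m n A t * (max_row_abs_sum k n B) ^ (m - 1)"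
    using rowT_bound[OF assms(1,2)] unfolding S_def T_def q_def L_def .
  finally show "lam \<in> (\<Union>i\<in>{..<n}. {z. cmod (z - c i) \<le>
        row_abs_sum m n A i * (max_row_abs_sum k n B) ^ (m - 1) - cmod (c i)})"
    using t(1) by auto
qed

end
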